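(* The short exact sequence $1\to\mathrm{Sym}(\{0,1\}^* )\to QT\xrightarrow{\pi} T\to 1$ does not split, i.e. there is no homomorphism $j:T\to QT$ with $\pi\circ j=\mathrm{id}_T$.
   Context: Let $\{0,1\}^*$ be the finite words over $\{0,1\}$, the vertices of the rooted binary tree in which $x$ has children $x0$ and $x1$ (two edge colours). $QV$ is the group of bijections $\tau$ of $\{0,1\}^*$ with $\tau(x0)=\tau(x)0$ and $\tau(x1)=\tau(x)1$ for all but finitely many $x$. Each such $\tau$ induces a homeomorphism $\pi(\tau)$ of $\{0,1\}^{\mathbb N}$ by $\pi(\tau)(\ell\omega)=\tau(\ell)\omega$, for $\ell$ in a finite maximal prefix-antichain $L$ with $\tau(\ell s)=\tau(\ell)s$ for all $\ell\in L$ and words $s$; this gives a surjective homomorphism $\pi:QV\to V$ onto Thompson's group $V$ with kernel $\mathrm{Sym}(\{0,1\}^* )$, the finitely supported permutations of $\{0,1\}^*$. Thompson's group $T\le V$ consists of the elements preserving the cyclic lexicographic order of $\{0,1\}^{\mathbb N}$; $QT=\pi^{-1}(T)$ and $\pi$ also denotes its restriction to $QT$. *)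

theory Defs
  imports Main
begin

text \<open>Finite words over {0,1}: bool list, with 0 = False and 1 = True.
  Cantor space {0,1}^N: nat \<Rightarrow> bool.\<close>

type_synonym word = "bool list"
type_synonym cantor = "nat \<Rightarrow> bool"

definition conc :: "word \<Rightarrow> cantor \<Rightarrow> cantor" where
  "conc l w = (\<lambda>n. if n < length l then l ! n else w (n - length l))"

definition pref :: "nat \<Rightarrow> cantor \<Rightarrow> word" where
  "pref n w = map w [0..<n]"

definition QV :: "(word \<Rightarrow> word) set" where
  "QV = {\<tau>. bij \<tau> \<and>
     finite {x. \<tau> (x @ [False]) \<noteq> \<tau> x @ [False] \<or> \<tau> (x @ [True]) \<noteq> \<tau> x @ [True]}}"

definition pi :: "(word \<Rightarrow> word) \<Rightarrow> cantor \<Rightarrow> cantor" where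
  "pi \<tau> w = (let n = (SOME n. \<forall>s. \<tau> (pref n w @ s) = \<tau> (pref n w) @ s)
              in conc (\<tau> (pref n w)) (\<lambda>k. w (k + n)))"

definition V :: "(cantor \<Rightarrow> cantor) set" where
  "V = pi ` QV"

definition lex_less :: "cantor \<Rightarrow> cantor \<Rightarrow> bool" where
  "lex_less x y = (\<exists>n. (\<forall>k<n. x k = y k) \<and> \<not> x n \<and> y n)"

definition cyc :: "cantor \<Rightarrow> cantor \<Rightarrow> cantor \<Rightarrow> bool" where
  "cyc x y z = ((lex_less x y \<and> lex_less y z) \<or> (lex_less y z \<and> lex_less z x)
               \<or> (lex_less z x \<and> lex_less x y))"

definition T :: "(cantor \<Rightarrow> cantor) set" where
  "T = {g \<in> V. \<forall>x y z. cyc x y z \<longrightarrow> cyc (g x) (g y) (g z)}"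

definition QT :: "(word \<Rightarrow> word) set" where
  "QT = {\<tau> \<in> QV. pi \<tau> \<in> T}"

end

theory Submission imports Defs "HOL-Computational_Algebra.Primes" begin



fun enc :: "nat \<Rightarrow> nat \<Rightarrow> bool list" where
  "enc 0 n = []" | "enc (Suc m) n = enc m (n div 2) @ [odd n]"

definition wval :: "bool list \<Rightarrow> nat" where
  "wval xs = foldl (\<lambda>a b. 2*a + of_bool b) 0 xs"

lemma wval_Nil[simp]: "wval [] = 0" by (simp add: wval_def)
lemma wval_snoc[simp]: "wval (xs@[b]) = 2 * wval xs + of_bool b" by (simp add: wval_def)

lemma wval_less: "wval xs < 2 ^ length xs"
  by (induction xs rule: rev_induct) auto

lemma length_enc[simp]: "length (enc m n) = m"
  by (induction m arbitrary: n) auto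

lemma wval_enc[simp]: "wval (enc m n) = n mod 2 ^ m"
proof (induction m arbitrary: n)
  case 0 then show ?case by simp
next
  case (Suc m)
  have "n mod (2 * 2^m) = 2 * (n div 2 mod 2^m) + n mod 2" by (rule mod_mult2_eq)
  then show ?case using Suc by (simp add: odd_iff_mod_2_eq_one)
qed

lemma enc_wval: "length xs = m \<Longrightarrow> enc m (wval xs) = xs"
proof (induction xs arbitrary: m rule: rev_induct)
  case Nil then show ?case by simp
next
  case (snoc x xs)
  then obtain k where m: "m = Suc k" "length xs = k" by auto
  then show ?case using snoc by simp
qed

lemma enc_mod: "enc m (n mod 2^m) = enc m n"
  by (metis enc_wval length_enc wval_enc)

lemma enc_add_mod: "enc m (a mod 2^m + b) = enc m (a + b)"
  by (metis enc_mod mod_add_left_eq)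

lemma wval_inj: "length a = length b \<Longrightarrow> wval a = wval b \<Longrightarrow> a = b"
  by (metis enc_wval)

lemma enc_Suc_front: "enc (Suc m) n = odd (n div 2^m) # enc m n"
proof (induction m arbitrary: n)
  case 0 then show ?case by simp
next
  case (Suc m)
  have "enc (Suc (Suc m)) n = enc (Suc m) (n div 2) @ [odd n]" by simp
  also have "\<dots> = (odd (n div 2 div 2^m) # enc m (n div 2)) @ [odd n]" using Suc by simp
  also have "n div 2 div 2^m = n div 2^(Suc m)" by (simp add: div_mult2_eq)
  finally show ?case by simp
qed

lemma wval_Cons: "wval (b # xs) = of_bool b * 2 ^ length xs + wval xs"
proof (induction xs rule: rev_induct)
  case Nil then show ?case by (simp add: wval_def)
next
  case (snoc x xs)
  have "wval (b # xs @ [x]) = 2 * wval (b # xs) + of_bool x" using wval_snoc[of "b#xs" x] by simp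
  then show ?case using snoc by (simp add: algebra_simps)
qed




definition sh :: "nat \<Rightarrow> cantor \<Rightarrow> cantor" where "sh m w = (\<lambda>i. w (i + m))"

lemma length_pref[simp]: "length (pref m w) = m" by (simp add: pref_def)

lemma pref_conc_len[simp]: "pref (length p) (conc p \<omega>) = p"
  by (rule nth_equalityI) (auto simp: pref_def conc_def)

lemma sh_conc_len[simp]: "sh (length p) (conc p \<omega>) = \<omega>"
  by (auto simp: sh_def conc_def)

lemma conc_pref_sh[simp]: "conc (pref m w) (sh m w) = w"
  by (auto simp: sh_def conc_def pref_def)

lemma conc_append: "conc (a @ b) \<omega> = conc a (conc b \<omega>)"
  by (auto simp: conc_def nth_append)

lemma conc_Nil[simp]: "conc [] \<omega> = \<omega>" by (simp add: conc_def)

lemma conc_inj: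
  assumes "conc a (\<lambda>_. True) = conc b (\<lambda>_. True)" "conc a (\<lambda>_. False) = conc b (\<lambda>_. False)"
  shows "a = b"
proof -
  have key: "length a \<le> length b" if "conc a (\<lambda>_. True) = conc b (\<lambda>_. True)"
     "conc a (\<lambda>_. False) = conc b (\<lambda>_. False)" for a b
  proof (rule ccontr)
    assume "\<not> length a \<le> length b"
    hence l: "length b < length a" by simp
    have "conc a (\<lambda>_. True) (length b) = conc b (\<lambda>_. True) (length b)" using that by simp
    moreover have "conc a (\<lambda>_. False) (length b) = conc b (\<lambda>_. False) (length b)" using that by simp
    ultimately show False using l by (simp add: conc_def)
  qed
  have "length a = length b" using key[OF assms] key[OF assms[symmetric]] by simp
  moreover have "a ! i = b ! i" if "i < length a" for i
    using fun_cong[OF assms(1), of i] that \<open>length a = length b\<close> by (simp add: conc_def)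
  ultimately show ?thesis by (rule nth_equalityI)
qed

lemma pref_conc_ge: "length p \<le> n \<Longrightarrow> pref n (conc p \<omega>) = p @ pref (n - length p) \<omega>"
  by (rule nth_equalityI) (auto simp: pref_def conc_def nth_append)

lemma sh_conc_ge: "length p \<le> n \<Longrightarrow> sh n (conc p \<omega>) = sh (n - length p) \<omega>"
  by (auto simp: sh_def conc_def)

lemma pref_conc_le: "n \<le> length p \<Longrightarrow> pref n (conc p \<omega>) = take n p"
  by (rule nth_equalityI) (auto simp: pref_def conc_def)

lemma sh_conc_le: "n \<le> length p \<Longrightarrow> sh n (conc p \<omega>) = conc (drop n p) \<omega>"
  by (rule ext) (auto simp: sh_def conc_def add.commute)

lemma pi_good:
  assumes good: "\<forall>s. \<tau> (p @ s) = \<tau> p @ s"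
  shows "pi \<tau> (conc p \<omega>) = conc (\<tau> p) \<omega>"
proof -
  define w where "w = conc p \<omega>"
  define n0 where "n0 = (SOME n. \<forall>s. \<tau> (pref n w @ s) = \<tau> (pref n w) @ s)"
  have ex: "\<forall>s. \<tau> (pref (length p) w @ s) = \<tau> (pref (length p) w) @ s"
    using good by (simp add: w_def)
  have n0: "\<forall>s. \<tau> (pref n0 w @ s) = \<tau> (pref n0 w) @ s"
    unfolding n0_def using someI[where P="\<lambda>n. \<forall>s. \<tau> (pref n w @ s) = \<tau> (pref n w) @ s", OF ex] .
  have pi_eq: "pi \<tau> w = conc (\<tau> (pref n0 w)) (\<lambda>k. w (k + n0))"
    by (simp add: pi_def n0_def Let_def)
  have shw: "(\<lambda>k. w (k + n0)) = sh n0 w" by (simp add: sh_def)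
  show ?thesis
  proof (cases "n0 \<le> length p")
    case True
    have pt: "p = pref n0 w @ drop n0 p" using True by (simp add: w_def pref_conc_le)
    have "\<tau> p = \<tau> (pref n0 w) @ drop n0 p" using n0 pt by metis
    then show ?thesis using True pi_eq shw
      by (simp add: w_def sh_conc_le conc_append)
  next
    case False
    have "pref n0 w = p @ pref (n0 - length p) \<omega>" using False by (simp add: w_def pref_conc_ge)
    hence "\<tau> (pref n0 w) = \<tau> p @ pref (n0 - length p) \<omega>" using good by simp
    then show ?thesis using False pi_eq shw
      by (simp add: w_def sh_conc_ge conc_append)
  qed
qed

lemma QV_deep:
  assumes "\<tau> \<in> QV"
  shows "\<exists>N. \<forall>p. N \<le> length p \<longrightarrow> (\<forall>s. \<tau> (p @ s) = \<tau> p @ s)"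
proof -
  let ?B = "{x. \<tau> (x @ [False]) \<noteq> \<tau> x @ [False] \<or> \<tau> (x @ [True]) \<noteq> \<tau> x @ [True]}"
  have "finite ?B" using assms by (simp add: QV_def)
  hence "finite (length ` ?B)" by simp
  then obtain N where N0: "\<forall>k\<in>length ` ?B. k < N"
    using finite_nat_set_iff_bounded by blast
  hence N: "\<forall>x\<in>?B. length x < N" by blast
  have "\<tau> (p @ s) = \<tau> p @ s" if "N \<le> length p" for p s
  proof (induction s rule: rev_induct)
    case Nil then show ?case by simp
  next
    case (snoc x xs)
    have "\<not> length (p @ xs) < N" using that by simp
    hence "p @ xs \<notin> ?B" using N by blast
    hence "\<tau> ((p @ xs) @ [x]) = \<tau> (p @ xs) @ [x]" by (cases x) auto
    then show ?case using snoc by simp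
  qed
  then show ?thesis by blast
qed




definition rot :: "nat \<Rightarrow> nat \<Rightarrow> cantor \<Rightarrow> cantor" where
  "rot m k w = conc (enc m (wval (pref m w) + k)) (sh m w)"

definition rw :: "nat \<Rightarrow> nat \<Rightarrow> word \<Rightarrow> word" where
  "rw m k p = (if length p < m then p else enc m (wval (take m p) + k) @ drop m p)"

lemma length_rw[simp]: "length (rw m k p) = length p"
  by (simp add: rw_def)

lemma rw_good: "m \<le> length p \<Longrightarrow> rw m k (p @ s) = rw m k p @ s"
  by (simp add: rw_def)

lemma pi_rw: "pi (rw m k) = rot m k"
proof
  fix w
  have "pi (rw m k) (conc (pref m w) (sh m w)) = conc (rw m k (pref m w)) (sh m w)"
    by (rule pi_good) (simp add: rw_good)
  then show "pi (rw m k) w = rot m k w" by (simp add: rw_def rot_def)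
qed

lemma rw_comp: "rw m a (rw m b p) = rw m (a + b) p"
proof (cases "length p < m")
  case True then show ?thesis by (simp add: rw_def)
next
  case False
  define x where "x = wval (take m p)"
  have "rw m a (rw m b p) = enc m (wval (enc m (x + b)) + a) @ drop m p"
    using False by (simp add: rw_def x_def)
  also have "enc m (wval (enc m (x + b)) + a) = enc m (x + (a + b))"
    using enc_add_mod[where m=m and a="x+b" and b=a] by (simp add: ac_simps)
  finally show ?thesis using False by (simp add: rw_def x_def)
qed

lemma rw_0: "rw m 0 = id"
  by (auto simp: rw_def enc_wval)

lemma enc_add_mod2: "enc m (x + k mod 2^m) = enc m (x + k)"
  using enc_add_mod[where m=m and a=k and b=x] by (simp add: add.commute)

lemma rw_mod: "rw m (k mod 2^m) = rw m k"
  by (rule ext) (simp add: rw_def enc_add_mod2)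

lemma rw_QV: "rw m k \<in> QV"
proof -
  define k' where "k' = 2^m - k mod 2^m"
  have "k mod 2^m < 2^m" by simp
  hence "k mod 2^m + k' = 2^m" unfolding k'_def by simp
  hence "(k + k') mod 2^m = 0" by (metis mod_add_left_eq mod_self)
  hence id1: "rw m (k + k') = id" using rw_mod[of m "k+k'"] rw_0[of m] by simp
  hence id2: "rw m (k' + k) = id" by (simp add: add.commute)
  have "bij (rw m k)"
    by (rule o_bij[of "rw m k'"]) (auto simp: rw_comp id1 id2)
  moreover have "{x. rw m k (x @ [False]) \<noteq> rw m k x @ [False] \<or> rw m k (x @ [True]) \<noteq> rw m k x @ [True]}
      \<subseteq> {x. set x \<subseteq> UNIV \<and> length x \<le> m}"
  proof
    fix x assume x: "x \<in> {x. rw m k (x @ [False]) \<noteq> rw m k x @ [False] \<or> rw m k (x @ [True]) \<noteq> rw m k x @ [True]}"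
    show "x \<in> {x. set x \<subseteq> UNIV \<and> length x \<le> m}"
    proof (rule ccontr)
      assume "x \<notin> {x. set x \<subseteq> UNIV \<and> length x \<le> m}"
      hence "m \<le> length x" by simp
      thus False using x rw_good[of m x k] by simp
    qed
  qed
  hence "finite {x. rw m k (x @ [False]) \<noteq> rw m k x @ [False] \<or> rw m k (x @ [True]) \<noteq> rw m k x @ [True]}"
    by (rule finite_subset) (rule finite_lists_length_le, simp)
  ultimately show ?thesis by (simp add: QV_def)
qed

lemma pref_rot[simp]: "pref m (rot m k w) = enc m (wval (pref m w) + k)"
  by (metis length_enc pref_conc_len rot_def)

lemma sh_rot[simp]: "sh m (rot m k w) = sh m w"
  by (metis length_enc sh_conc_len rot_def)

lemma rot_comp: "rot m a (rot m b w) = rot m (a + b) w"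
proof -
  have "rot m a (rot m b w) = conc (enc m (wval (pref m (rot m b w)) + a)) (sh m (rot m b w))"
    by (simp only: rot_def)
  also have "\<dots> = conc (enc m (wval (pref m w) + (a + b))) (sh m w)"
    using enc_add_mod[where m=m and a="wval (pref m w) + b" and b=a] by (simp add: ac_simps)
  also have "\<dots> = rot m (a + b) w" by (simp add: rot_def)
  finally show ?thesis .
qed

lemma rot_0: "rot m 0 = id"
  by (auto simp: rot_def enc_wval)

lemma rot_mod: "rot m (k mod 2^m) = rot m k"
  by (rule ext) (simp add: rot_def enc_add_mod2)

lemma rot_pow: "rot m (2^m) = id"
  using rot_mod[of m "2^m"] rot_0[of m] by simp

lemma sh_Suc: "sh (Suc m) w = sh m (sh 1 w)"
  by (auto simp: sh_def)

lemma pref_Suc_front: "pref (Suc m) w = w 0 # pref m (sh 1 w)"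
  by (rule nth_equalityI) (auto simp del: upt_Suc simp: pref_def sh_def nth_Cons split: nat.split)

lemma rot_half: "rot (Suc m) (2^m) = rot 1 1"
proof
  fix w
  define a where "a = wval (pref m (sh 1 w))"
  have a: "a < 2^m" unfolding a_def using wval_less[of "pref m (sh 1 w)"] by simp
  have v: "wval (pref (Suc m) w) = of_bool (w 0) * 2^m + a"
    by (simp add: pref_Suc_front wval_Cons a_def)
  have d: "(of_bool (w 0) * 2^m + a + 2^m) div 2^m = of_bool (w 0) + 1"
  proof -
    have "of_bool (w 0) * 2^m + a + 2^m = a + (of_bool (w 0) + 1) * 2^m" by (simp add: algebra_simps)
    also have "\<dots> div 2^m = of_bool (w 0) + 1 + a div 2^m" by (rule div_mult_self1) simp
    finally show ?thesis using a by simp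
  qed
  have e: "enc m (of_bool (w 0) * 2^m + a + 2^m) = pref m (sh 1 w)"
  proof -
    have "(of_bool (w 0) * 2^m + a + 2^m) mod 2^m = a" using a by simp
    then show ?thesis using enc_mod[of m "of_bool (w 0) * 2^m + a + 2^m"] enc_wval[of "pref m (sh 1 w)" m]
      by (simp add: a_def)
  qed
  have "rot (Suc m) (2^m) w = conc ((\<not> w 0) # pref m (sh 1 w)) (sh m (sh 1 w))"
  proof -
    have "rot (Suc m) (2^m) w = conc (enc (Suc m) (of_bool (w 0) * 2^m + a + 2^m)) (sh (Suc m) w)"
      unfolding rot_def v ..
    also have "enc (Suc m) (of_bool (w 0) * 2^m + a + 2^m) = (\<not> w 0) # pref m (sh 1 w)"
      unfolding enc_Suc_front d e by simp
    finally show ?thesis unfolding sh_Suc[of m w] .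
  qed
  also have "\<dots> = conc [\<not> w 0] (sh 1 w)"
    by (simp add: conc_append[of "[_]" "pref m (sh 1 w)", simplified])
  also have "\<dots> = rot 1 1 w"
    by (cases "w 0") (simp_all add: rot_def pref_def wval_def)
  finally show "rot (Suc m) (2^m) w = rot 1 1 w" .
qed




lemma lex_trans: "lex_less x y \<Longrightarrow> lex_less y z \<Longrightarrow> lex_less x z"
proof -
  assume "lex_less x y" "lex_less y z"
  then obtain n1 n2 where a: "\<forall>k<n1. x k = y k" "\<not> x n1" "y n1"
    and b: "\<forall>k<n2. y k = z k" "\<not> y n2" "z n2" by (auto simp: lex_less_def)
  consider "n1 < n2" | "n2 < n1" | "n1 = n2" by linarith
  then show ?thesis
  proof cases
    case 1 then show ?thesis using a b unfolding lex_less_def by (intro exI[of _ n1]) auto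
  next
    case 2 then show ?thesis using a b unfolding lex_less_def by (intro exI[of _ n2]) auto
  next
    case 3 then show ?thesis using a b by simp
  qed
qed

lemma lex_asym: "lex_less x y \<Longrightarrow> lex_less y x \<Longrightarrow> False"
proof -
  assume "lex_less x y" "lex_less y x"
  then obtain n1 n2 where a: "\<forall>k<n1. x k = y k" "\<not> x n1" "y n1"
    and b: "\<forall>k<n2. y k = x k" "\<not> y n2" "x n2" by (auto simp: lex_less_def)
  consider "n1 < n2" | "n2 < n1" | "n1 = n2" by linarith
  then show False using a b by cases auto
qed

lemma lex_step: "lex_less s t \<longleftrightarrow> (\<not> s 0 \<and> t 0) \<or> (s 0 = t 0 \<and> lex_less (sh 1 s) (sh 1 t))"
proof
  assume "lex_less s t"
  then obtain n where n: "\<forall>k<n. s k = t k" "\<not> s n" "t n" by (auto simp: lex_less_def)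
  show "(\<not> s 0 \<and> t 0) \<or> (s 0 = t 0 \<and> lex_less (sh 1 s) (sh 1 t))"
  proof (cases n)
    case 0 then show ?thesis using n by simp
  next
    case (Suc n')
    have "lex_less (sh 1 s) (sh 1 t)" unfolding lex_less_def sh_def
      using n Suc by (intro exI[of _ n']) auto
    then show ?thesis using n Suc by auto
  qed
next
  assume "(\<not> s 0 \<and> t 0) \<or> (s 0 = t 0 \<and> lex_less (sh 1 s) (sh 1 t))"
  then show "lex_less s t"
  proof
    assume "\<not> s 0 \<and> t 0" then show ?thesis unfolding lex_less_def by (intro exI[of _ 0]) auto
  next
    assume h: "s 0 = t 0 \<and> lex_less (sh 1 s) (sh 1 t)"
    then obtain n where n: "\<forall>k<n. s (k+1) = t (k+1)" "\<not> s (n+1)" "t (n+1)"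
      by (auto simp: lex_less_def sh_def)
    have "\<forall>k<Suc n. s k = t k"
    proof (intro allI impI)
      fix k assume "k < Suc n" then show "s k = t k" using h n by (cases k) auto
    qed
    then show ?thesis unfolding lex_less_def using n by (intro exI[of _ "Suc n"]) auto
  qed
qed

lemma pref_Suc_snoc: "pref (Suc m) x = pref m x @ [x m]"
  by (simp add: pref_def)

lemma sh_Suc2: "sh (Suc m) x = sh 1 (sh m x)"
  by (auto simp: sh_def ac_simps)

lemma sh_0[simp]: "sh 0 x = x" by (simp add: sh_def)

lemma sh_at0: "sh m x 0 = x m" by (simp add: sh_def)

lemma arith_snoc: "((2::nat) * a + of_bool b1 < 2 * c + of_bool b2) \<longleftrightarrow> (a < c \<or> (a = c \<and> \<not> b1 \<and> b2))"
  by (cases b1; cases b2) auto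

lemma lex_pref:
  "lex_less x y \<longleftrightarrow> wval (pref m x) < wval (pref m y) \<or> (pref m x = pref m y \<and> lex_less (sh m x) (sh m y))"
proof (induction m)
  case 0 then show ?case by (simp add: pref_def)
next
  case (Suc m)
  have inj: "pref m x = pref m y \<longleftrightarrow> wval (pref m x) = wval (pref m y)"
    using wval_inj[of "pref m x" "pref m y"] by auto
  show ?case
    unfolding Suc pref_Suc_snoc wval_snoc arith_snoc sh_Suc2[of m x] sh_Suc2[of m y]
    unfolding lex_step[of "sh m x"] sh_at0 using inj by auto
qed

lemma cyc_split:
  assumes AB: "\<And>x y. x \<in> A \<Longrightarrow> y \<notin> A \<Longrightarrow> lex_less x y"
    and BA: "\<And>x y. x \<in> A \<Longrightarrow> y \<notin> A \<Longrightarrow> lex_less (g y) (g x)"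
    and AA: "\<And>x y. x \<in> A \<Longrightarrow> y \<in> A \<Longrightarrow> lex_less x y \<Longrightarrow> lex_less (g x) (g y)"
    and BB: "\<And>x y. x \<notin> A \<Longrightarrow> y \<notin> A \<Longrightarrow> lex_less x y \<Longrightarrow> lex_less (g x) (g y)"
    and c: "cyc x y z"
  shows "cyc (g x) (g y) (g z)"
proof -
  have P: "lex_less u v \<Longrightarrow> (u \<in> A \<longleftrightarrow> v \<in> A) \<Longrightarrow> lex_less (g u) (g v)" for u v
    using AA BB by blast
  have Q: "lex_less u v \<Longrightarrow> u \<in> A \<Longrightarrow> v \<notin> A \<Longrightarrow> lex_less (g v) (g u)" for u v
    using BA by blast
  have R: "lex_less u v \<Longrightarrow> u \<notin> A \<Longrightarrow> v \<in> A \<Longrightarrow> False" for u v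
    using AB lex_asym by blast
  have main: "lex_less u v \<Longrightarrow> lex_less v w \<Longrightarrow> cyc (g u) (g v) (g w)" for u v w
  proof -
    assume uv: "lex_less u v" and vw: "lex_less v w"
    have uw: "lex_less u w" using uv vw lex_trans by blast
    show ?thesis
    proof (cases "u \<in> A")
      case uA: True
      show ?thesis
      proof (cases "v \<in> A")
        case vA: True
        show ?thesis
        proof (cases "w \<in> A")
          case True
          then show ?thesis using P[OF uv] P[OF vw] uA vA unfolding cyc_def by simp
        next
          case False
          then show ?thesis using P[OF uv] Q[OF uw] uA vA unfolding cyc_def by simp
        qed
      next
        case vB: False
        have wB: "w \<notin> A" using R[OF vw] vB by blast
        show ?thesis using P[OF vw] Q[OF uw] vB wB uA unfolding cyc_def by simp
      qed
    next
      case uB: False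
      have vB: "v \<notin> A" using R[OF uv] uB by blast
      have wB: "w \<notin> A" using R[OF vw] vB by blast
      show ?thesis using P[OF uv] P[OF vw] uB vB wB unfolding cyc_def by simp
    qed
  qed
  have rot3: "cyc a b d \<Longrightarrow> cyc b d a" for a b d unfolding cyc_def by blast
  from c show ?thesis unfolding cyc_def[of x y z]
  proof (elim disjE conjE)
    assume "lex_less x y" "lex_less y z" then show ?thesis using main by blast
  next
    assume "lex_less y z" "lex_less z x" then show ?thesis using main[of y z x] rot3 by blast
  next
    assume "lex_less z x" "lex_less x y" then show ?thesis using main[of z x y] rot3 by blast
  qed
qed

lemma wval_pref_less: "wval (pref m w) < 2^m"
  using wval_less[of "pref m w"] by simp

lemma rot_cyc: "cyc x y z \<Longrightarrow> cyc (rot m k x) (rot m k y) (rot m k z)"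
proof -
  assume c: "cyc x y z"
  define k' where "k' = k mod 2^m"
  have k': "k' < 2^m" by (simp add: k'_def)
  have r: "rot m k = rot m k'" by (simp add: k'_def rot_mod)
  let ?v = "\<lambda>w. wval (pref m w)"
  define A where "A = {w. ?v w + k' < 2^m}"
  have vr: "?v (rot m k' w) = (?v w + k') mod 2^m" for w by simp
  have vA: "w \<in> A \<Longrightarrow> ?v (rot m k' w) = ?v w + k'" for w by (simp add: A_def)
  have vB: "w \<notin> A \<Longrightarrow> ?v (rot m k' w) = ?v w + k' - 2^m" for w
  proof -
    assume "w \<notin> A"
    hence "2^m \<le> ?v w + k'" "?v w + k' < 2 * 2^m" using k' wval_pref_less[of m w] by (auto simp: A_def)
    then show ?thesis by (simp add: vr le_mod_geq)
  qed
  have eqp: "pref m a = pref m b \<Longrightarrow> pref m (rot m k' a) = pref m (rot m k' b)" for a b by simp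
  have ps: "sh m (rot m k' w) = sh m w" for w by simp
  show ?thesis unfolding r
  proof (rule cyc_split[where A=A, OF _ _ _ _ c])
    fix a b assume "a \<in> A" "b \<notin> A"
    then show "lex_less a b" by (intro iffD2[OF lex_pref[of a b m]] disjI1) (auto simp: A_def)
  next
    fix a b assume ab: "a \<in> A" "b \<notin> A"
    have "?v b < 2^m" by (rule wval_pref_less)
    have "2^m \<le> ?v b + k'" using ab by (auto simp: A_def)
    then show "lex_less (rot m k' b) (rot m k' a)"
      by (intro iffD2[OF lex_pref[of _ _ m]] disjI1) (use vA[OF ab(1)] vB[OF ab(2)] k' \<open>2^m \<le> ?v b + k'\<close> \<open>?v b < 2^m\<close> in simp)
  next
    fix a b assume ab: "a \<in> A" "b \<in> A" "lex_less a b"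
    from iffD1[OF lex_pref[of a b m] ab(3)]
    show "lex_less (rot m k' a) (rot m k' b)"
    proof
      assume "?v a < ?v b"
      then show ?thesis by (intro iffD2[OF lex_pref[of _ _ m]] disjI1) (use vA[OF ab(1)] vA[OF ab(2)] in simp)
    next
      assume h: "pref m a = pref m b \<and> lex_less (sh m a) (sh m b)"
      show ?thesis by (intro iffD2[OF lex_pref[of _ _ m]] disjI2) (use ps eqp[of a b] h in simp)
    qed
  next
    fix a b assume ab: "a \<notin> A" "b \<notin> A" "lex_less a b"
    have "2^m \<le> ?v a + k'" "2^m \<le> ?v b + k'" using ab by (auto simp: A_def)
    from iffD1[OF lex_pref[of a b m] ab(3)]
    show "lex_less (rot m k' a) (rot m k' b)"
    proof
      assume "?v a < ?v b"
      then show ?thesis using \<open>2^m \<le> ?v a + k'\<close>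
        by (intro iffD2[OF lex_pref[of _ _ m]] disjI1) (use vB[OF ab(1)] vB[OF ab(2)] in simp)
    next
      assume h: "pref m a = pref m b \<and> lex_less (sh m a) (sh m b)"
      show ?thesis by (intro iffD2[OF lex_pref[of _ _ m]] disjI2) (use ps eqp[of a b] h in simp)
    qed
  qed
qed

lemma rot_T: "rot m k \<in> T"
proof -
  have "rot m k \<in> V" unfolding V_def using pi_rw[of m k] rw_QV[of m k] by (metis image_eqI)
  then show ?thesis unfolding T_def using rot_cyc by blast
qed




lemma period_mult: "(f^^n) x = x \<Longrightarrow> (f^^(q*n)) x = x"
proof (induction q)
  case 0 then show ?case by simp
next
  case (Suc q)
  have "(f^^(Suc q * n)) x = (f^^n) ((f^^(q*n)) x)" by (simp add: funpow_add)
  then show ?case using Suc by simp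
qed

lemma period_gcd: "(f^^a) x = x \<longrightarrow> (f^^b) x = x \<longrightarrow> (f^^(gcd a b)) x = x"
proof (induction a b rule: gcd_nat_induct)
  case (base m) then show ?case by simp
next
  case (step m n)
  show ?case
  proof (intro impI)
    assume a: "(f^^m) x = x" and b: "(f^^n) x = x"
    have e: "(f^^(m mod n + (m div n) * n)) x = (f^^(m mod n)) ((f^^((m div n) * n)) x)"
      by (simp only: funpow_add o_apply)
    hence "(f^^m) x = (f^^(m mod n)) ((f^^((m div n) * n)) x)" by simp
    hence "(f^^(m mod n)) x = x" using a period_mult[OF b] by simp
    then show "(f^^(gcd m n)) x = x" using step b by (simp add: gcd_red_nat[of m n])
  qed
qed

lemma dvd_two_pow_less:
  fixes g :: nat
  assumes "g dvd 2^m" "g < 2^m"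
  shows "g dvd 2^(m-1)"
proof -
  obtain e where e: "e \<le> m" "normalize g = 2^e"
    using divides_primepow[OF two_is_prime_nat assms(1)] by blast
  hence g: "g = 2^e" by simp
  have "e < m"
  proof (rule ccontr)
    assume "\<not> e < m" hence "m \<le> e" by simp
    hence "(2::nat)^m \<le> 2^e" by (rule power_increasing) simp
    then show False using assms(2) g by simp
  qed
  then show ?thesis using g by (simp add: le_imp_power_dvd)
qed

lemma orbit_count:
  fixes h :: "'a \<Rightarrow> 'a"
  assumes inj: "inj h" and ord: "h^^(2^m) = id" and m: "0 < m"
  shows "finite G \<Longrightarrow> h ` G \<subseteq> G \<Longrightarrow> (\<forall>x\<in>G. (h^^(2^(m-1))) x \<noteq> x) \<Longrightarrow> 2^m dvd card G"
proof (induction "card G" arbitrary: G rule: less_induct)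
  case less
  show ?case
  proof (cases "G = {}")
    case True then show ?thesis by simp
  next
    case False
    then obtain x where x: "x \<in> G" by blast
    have powG: "(h^^i) y \<in> G" if "y \<in> G" for i y
      using that by (induction i) (use less.prems(2) in auto)
    define Orb where "Orb = (\<lambda>i. (h^^i) x) ` {..<2^m}"
    have OG: "Orb \<subseteq> G" unfolding Orb_def using powG x by auto
    have inj_on: "inj_on (\<lambda>i. (h^^i) x) {..<2^m}"
    proof (rule linorder_inj_onI')
      fix i j :: nat assume ij0: "i \<in> {..<2^m}" "j \<in> {..<2^m}" "i < j"
      show "(h^^i) x \<noteq> (h^^j) x"
      proof
      assume eqij: "(h^^i) x = (h^^j) x"
      note ij = ij0(3) eqij ij0(1) ij0(2)
      have e: "(h^^(i + (j-i))) x = (h^^i) ((h^^(j-i)) x)" by (simp only: funpow_add o_apply)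
      have "(h^^j) x = (h^^i) ((h^^(j-i)) x)" using ij(1) e by simp
      hence "(h^^i) ((h^^(j-i)) x) = (h^^i) x" using ij by simp
      moreover have "inj (h^^i)" by (rule inj_fn[OF inj])
      ultimately have per: "(h^^(j-i)) x = x" by (simp add: inj_eq)
      have per2: "(h^^(2^m)) x = x" using ord by simp
      let ?g = "gcd (j-i) (2^m)"
      have pg: "(h^^?g) x = x" using period_gcd[where f=h and a="j-i" and b="2^m" and x=x] per per2 by simp
      have gle: "?g \<le> j - i" using ij(1) by (simp add: gcd_le1_nat)
      have "j - i < 2^m" using ij(4) by simp
      hence glt: "?g < 2^m" using gle by linarith
      have "?g dvd 2^(m-1)" by (rule dvd_two_pow_less[OF _ glt]) simp
      then obtain q where q: "2^(m-1) = ?g * q" by (elim dvdE)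
      have "(h^^(q * ?g)) x = x" using period_mult[where f=h and n="?g" and x=x and q=q] pg by blast
      hence "(h^^(2^(m-1))) x = x" using q by (simp add: mult.commute)
      then show False using less.prems(3) x by blast
      qed
    qed
    have cardO: "card Orb = 2^m" unfolding Orb_def using card_image[OF inj_on] by simp
    define G' where "G' = G - Orb"
    have fin': "finite G'" using less.prems(1) by (simp add: G'_def)
    have inv': "h ` G' \<subseteq> G'"
    proof
      fix z assume "z \<in> h ` G'"
      then obtain y where y: "y \<in> G'" "z = h y" by blast
      have "h y \<in> G" using y less.prems(2) by (auto simp: G'_def)
      moreover have "h y \<notin> Orb"
      proof
        assume "h y \<in> Orb"
        then obtain i where i: "i < 2^m" "h y = (h^^i) x" by (auto simp: Orb_def)
        show False
        proof (cases i)
          case 0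
          have "(h^^(2^m)) x = x" using ord by simp
          moreover have "(2::nat)^m = Suc (2^m - 1)" by simp
          have eq: "h ((h^^(2^m - 1)) x) = (h^^(Suc (2^m - 1))) x" by (simp only: funpow.simps o_apply)
          ultimately have "h ((h^^(2^m - 1)) x) = x" by simp
          hence "y = (h^^(2^m - 1)) x" using i 0 inj by (simp add: injD)
          hence "y \<in> Orb" unfolding Orb_def by auto
          then show False using y by (simp add: G'_def)
        next
          case (Suc i')
          hence "h y = h ((h^^i') x)" using i by simp
          hence "y = (h^^i') x" using inj by (simp add: injD)
          hence "y \<in> Orb" unfolding Orb_def using i Suc by auto
          then show False using y by (simp add: G'_def)
        qed
      qed
      ultimately show "z \<in> G'" using y by (simp add: G'_def)
    qed
    have finO: "finite Orb" using OG less.prems(1) finite_subset by blast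
    have cG: "card G = card G' + card Orb"
      unfolding G'_def using OG less.prems(1) finO card_Diff_subset[OF finO OG] card_mono[OF less.prems(1) OG]
      by simp
    have lt: "card G' < card G" using cG cardO by simp
    have "2^m dvd card G'" using less.hyps[OF lt fin' inv'] less.prems(3) by (auto simp: G'_def)
    then show ?thesis using cardO cG by simp
  qed
qed




lemma card_short_words: "card {xs::bool list. length xs < D} + 1 = 2^D"
proof (induction D)
  case 0 then show ?case by simp
next
  case (Suc D)
  have split: "{xs::bool list. length xs < Suc D} = {xs. length xs < D} \<union> {xs. set xs \<subseteq> UNIV \<and> length xs = D}"
    by auto
  have f1: "finite {xs::bool list. length xs < D}"
    using finite_lists_length_le[of "UNIV::bool set" D] by (rule finite_subset[rotated]) auto
  have f2: "finite {xs::bool list. set xs \<subseteq> (UNIV::bool set) \<and> length xs = D}"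
    by (rule finite_lists_length_eq) simp
  have c2: "card {xs::bool list. length xs = D} = 2^D"
  proof -
    have "card {xs::bool list. set xs \<subseteq> (UNIV::bool set) \<and> length xs = D} = card (UNIV::bool set) ^ D"
      by (rule card_lists_length_eq) simp
    then show ?thesis by simp
  qed
  have "card {xs::bool list. length xs < Suc D} = card {xs::bool list. length xs < D} + 2^D"
    unfolding split by (subst card_Un_disjoint[OF f1 f2]) (auto simp: c2)
  then show ?case using Suc by simp
qed

lemma finite_short_words: "finite {xs::bool list. length xs < D}"
  using finite_lists_length_le[of "UNIV::bool set" D] by (rule finite_subset[rotated]) auto

lemma deep_rot:
  assumes "\<tau> \<in> QV" "pi \<tau> = rot m k"
  shows "\<exists>N. \<forall>p. N \<le> length p \<longrightarrow> \<tau> p = rw m k p"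
proof -
  obtain N0 where N0: "\<forall>p. N0 \<le> length p \<longrightarrow> (\<forall>s. \<tau> (p @ s) = \<tau> p @ s)"
    using QV_deep[OF assms(1)] by blast
  have "\<tau> p = rw m k p" if "max N0 m \<le> length p" for p
  proof -
    have "conc (\<tau> p) \<omega> = conc (rw m k p) \<omega>" for \<omega>
    proof -
      have "conc (\<tau> p) \<omega> = pi \<tau> (conc p \<omega>)" using pi_good[of \<tau> p \<omega>] N0 that by simp
      also have "\<dots> = pi (rw m k) (conc p \<omega>)" using assms(2) pi_rw by simp
      also have "\<dots> = conc (rw m k p) \<omega>" using pi_good[of "rw m k" p \<omega>] rw_good[of m p k] that by simp
      finally show ?thesis .
    qed
    then show ?thesis by (intro conc_inj) auto
  qed
  then show ?thesis by blast
qed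

lemma rw11_nofix: "1 \<le> length p \<Longrightarrow> rw 1 1 p \<noteq> p"
proof
  assume l: "1 \<le> length p" and e: "rw 1 1 p = p"
  define x where "x = wval (take 1 p)"
  have "length (take 1 p) = 1" using l by (cases p) auto
  hence "x < 2" using wval_less[of "take 1 p"] by (simp add: x_def)
  have "\<not> length p < 1" using l by linarith
  hence "take 1 (rw 1 1 p) = enc 1 (x + 1)" unfolding rw_def x_def by simp
  hence "enc 1 (x + 1) = take 1 p" using e by simp
  hence "wval (enc 1 (x + 1)) = x" by (simp add: x_def)
  hence "(x + 1) mod 2^1 = x" by (simp only: wval_enc)
  then show False using \<open>x < 2\<close> by (cases x) auto
qed

theorem proposition2p10:
  shows "\<not> (\<exists>j :: (cantor \<Rightarrow> cantor) \<Rightarrow> (word \<Rightarrow> word).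
            (\<forall>g\<in>T. j g \<in> QT) \<and>
            (\<forall>g\<in>T. \<forall>h\<in>T. j (g \<circ> h) = j g \<circ> j h) \<and>
            (\<forall>g\<in>T. pi (j g) = g))"
proof
  assume "\<exists>j :: (cantor \<Rightarrow> cantor) \<Rightarrow> (word \<Rightarrow> word).
            (\<forall>g\<in>T. j g \<in> QT) \<and>
            (\<forall>g\<in>T. \<forall>h\<in>T. j (g \<circ> h) = j g \<circ> j h) \<and>
            (\<forall>g\<in>T. pi (j g) = g)"
  then obtain j :: "(cantor \<Rightarrow> cantor) \<Rightarrow> (word \<Rightarrow> word)" where
    jQT: "\<forall>g\<in>T. j g \<in> QT" and jhom: "\<forall>g\<in>T. \<forall>h\<in>T. j (g \<circ> h) = j g \<circ> j h"
    and jpi: "\<forall>g\<in>T. pi (j g) = g" by blast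
  have jQV: "j (rot m k) \<in> QV" for m k using jQT rot_T by (simp add: QT_def)
  have jbij: "bij (j (rot m k))" for m k using jQV[of m k] by (simp add: QV_def)
  have jpi': "pi (j (rot m k)) = rot m k" for m k using jpi rot_T by blast
  have idT: "id \<in> T" using rot_T[of 0 0] rot_0 by simp
  have jid: "j id = id"
  proof
    fix x
    have "j (id \<circ> id) = j id \<circ> j id" using jhom idT by blast
    hence "j id = j id \<circ> j id" by (simp only: comp_id)
    hence e: "j id (j id x) = j id x" by (simp add: fun_eq_iff)
    have "inj (j id)" using jbij[of 0 0] rot_0[of 0] by (simp add: bij_def)
    then show "j id x = id x" using e by (simp add: inj_eq)
  qed
  have jpow: "j (rot m k) = (j (rot m 1))^^k" for m k
  proof (induction k)
    case 0 show ?case by (simp only: rot_0 jid funpow.simps(1))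
  next
    case (Suc k)
    have "rot m (Suc k) = rot m 1 \<circ> rot m k" by (rule ext) (simp add: rot_comp)
    hence "j (rot m (Suc k)) = j (rot m 1) \<circ> j (rot m k)" using jhom rot_T by simp
    then show ?case using Suc by simp
  qed
  define \<sigma> where "\<sigma> = j (rot 1 1)"
  obtain N3 where N3: "\<forall>p. N3 \<le> length p \<longrightarrow> \<sigma> p = rw 1 1 p"
    using deep_rot[OF jQV jpi'] unfolding \<sigma>_def by blast
  define Fx where "Fx = {p. \<sigma> p = p}"
  have Fx_short: "length p < max N3 1" if "p \<in> Fx" for p
  proof (rule ccontr)
    assume "\<not> length p < max N3 1"
    hence "\<sigma> p = rw 1 1 p" "1 \<le> length p" using N3 by auto
    then show False using rw11_nofix that by (simp add: Fx_def)
  qed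
  have "Fx \<subseteq> {xs. length xs < max N3 1}" using Fx_short by blast
  hence finFx: "finite Fx" using finite_short_words finite_subset by blast
  define f where "f = card Fx"
  define m where "m = f + 1"
  have m0: "0 < m" by (simp add: m_def)
  define h where "h = j (rot m 1)"
  have hpow: "j (rot m k) = h^^k" for k unfolding h_def by (rule jpow)
  have hord: "h^^(2^m) = id" using hpow[of "2^m"] rot_pow[of m] jid by simp
  have hhalf: "h^^(2^(m-1)) = \<sigma>"
  proof -
    have "m = Suc (m - 1)" using m0 by simp
    hence "rot m (2^(m-1)) = rot 1 1" using rot_half[of "m-1"] by simp
    then show ?thesis using hpow[of "2^(m-1)"] by (simp add: \<sigma>_def)
  qed
  have hinj: "inj h" using jbij[of m 1] by (simp add: h_def bij_def)
  obtain N1 where N1: "\<forall>p. N1 \<le> length p \<longrightarrow> h p = rw m 1 p"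
    using deep_rot[OF jQV jpi'] unfolding h_def by blast
  obtain N2 where N2: "\<forall>p. N2 \<le> length p \<longrightarrow> (h^^(2^m - 1)) p = rw m (2^m - 1) p"
    using deep_rot[OF jQV jpi'[of m "2^m - 1"]] unfolding hpow by blast
  have hinv: "(h^^(2^m - 1)) (h p) = p" for p
  proof -
    have "(h^^(2^m - 1)) (h p) = (h^^(Suc (2^m - 1))) p" by (simp only: funpow_Suc_right o_apply)
    also have "Suc (2^m - 1) = (2::nat)^m" by simp
    finally show ?thesis using hord by simp
  qed
  define D where "D = max (max N1 N2) (max (max N3 1) m)"
  define S where "S = {p::word. length p < D}"
  have finS: "finite S" unfolding S_def by (rule finite_short_words)
  have hS: "h ` S \<subseteq> S"
  proof
    fix q assume "q \<in> h ` S"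
    then obtain p where p: "p \<in> S" "q = h p" by blast
    show "q \<in> S"
    proof (rule ccontr)
      assume "q \<notin> S"
      hence "D \<le> length q" by (simp add: S_def)
      hence "(h^^(2^m - 1)) q = rw m (2^m - 1) q" using N2 by (simp add: D_def)
      hence "length ((h^^(2^m - 1)) q) = length q" by simp
      hence "length p = length q" using hinv p by simp
      then show False using p \<open>D \<le> length q\<close> by (simp add: S_def)
    qed
  qed
  have FxS: "Fx \<subseteq> S"
  proof
    fix p assume "p \<in> Fx"
    hence "length p < max N3 1" by (rule Fx_short)
    thus "p \<in> S" by (simp add: S_def D_def)
  qed
  define G where "G = S - Fx"
  have comm: "\<sigma> (h p) = h (\<sigma> p)" for p
    unfolding hhalf[symmetric] by (simp add: funpow_swap1)
  have hG: "h ` G \<subseteq> G"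
  proof
    fix q assume "q \<in> h ` G"
    then obtain p where p: "p \<in> G" "q = h p" by blast
    have "q \<in> S" using p hS by (auto simp: G_def)
    moreover have "q \<notin> Fx"
    proof
      assume "q \<in> Fx"
      hence "h (\<sigma> p) = h p" using comm p by (simp add: Fx_def)
      hence "\<sigma> p = p" using hinj by (simp add: inj_eq)
      then show False using p by (simp add: G_def Fx_def)
    qed
    ultimately show "q \<in> G" by (simp add: G_def)
  qed
  have Gfree: "\<forall>x\<in>G. (h^^(2^(m-1))) x \<noteq> x" using hhalf by (simp add: G_def Fx_def)
  have dvdG: "2^m dvd card G"
    using orbit_count[OF hinj hord m0] finS hG Gfree by (simp add: G_def)
  have cG: "card G + f = card S" unfolding G_def f_def
    using card_Diff_subset[OF finFx FxS] card_mono[OF finS FxS] by simp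
  have cS: "card S + 1 = 2^D" unfolding S_def by (rule card_short_words)
  have "m \<le> D" by (simp add: D_def)
  hence "(2::nat)^m dvd 2^D" by (rule le_imp_power_dvd)
  hence "2^m dvd card G + (f + 1)" using cG cS by simp
  hence "2^m dvd f + 1" using dvdG dvd_add_right_iff by blast
  hence "2^m \<le> f + 1" by (rule dvd_imp_le) simp
  moreover have "m < 2^m" by (rule less_exp)
  ultimately show False by (simp add: m_def)
qed


end
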